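(* Let $M\ge2$, let $\pi^\star$ lie in the interior of the simplex $\Delta_M$, and define $V:\mathbb R^{M-1}\to\mathbb R$ by $V(S)=\log\big(1+\sum_{k=1}^{M-1}e^{S^{(k)}}\big)-\langle S,\pi^\star_{-M}\rangle$, so that $\nabla V(S)=\pi_{-M}(S)-\pi^\star_{-M}$. Then there exist $c_\infty>0$ and $R<\infty$ such that $\|\nabla V(S)\|\ge c_\infty$ for all $S\notin C_R:=\{S:V(S)\le R\}$. Moreover such a $c_\infty$ can be chosen with $c_\infty\le\mathrm{dist}(\pi^\star,\partial\Delta_M)$, and in particular with $c_\infty\le\min_{1\le j\le M}\pi^\star_j$.
   Context: $\pi^\star_{-M}=(\pi^\star_1,\dots,\pi^\star_{M-1})$. $\pi(S)$ is the softmax map $\pi_k(S)=e^{S^{(k)}}/(1+\sum_{j=1}^{M-1}e^{S^{(j)}})$ for $k\le M-1$, $\pi_M(S)=1/(1+\sum_{j=1}^{M-1}e^{S^{(j)}})$, and $\pi_{-M}(S)=(\pi_1(S),\dots,\pi_{M-1}(S))$. $\partial\Delta_M$ is the relative boundary of the simplex. *)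

theory Defs
  imports "HOL-Analysis.Analysis"
begin

text \<open>Vectors of R^(M-1) are represented as functions nat => real, of which only
the coordinates 1..M-1 matter; points of R^M (e.g. pi-star) use coordinates 1..M.\<close>

definition simplex_set :: "nat \<Rightarrow> (nat \<Rightarrow> real) set" where
  "simplex_set M = {p. (\<forall>j\<in>{1..M}. 0 \<le> p j) \<and> (\<Sum>j=1..M. p j) = 1}"

definition simplex_interior :: "nat \<Rightarrow> (nat \<Rightarrow> real) set" where
  "simplex_interior M = {p. (\<forall>j\<in>{1..M}. 0 < p j) \<and> (\<Sum>j=1..M. p j) = 1}"

definition simplex_boundary :: "nat \<Rightarrow> (nat \<Rightarrow> real) set" where
  "simplex_boundary M = {p \<in> simplex_set M. \<exists>j\<in>{1..M}. p j = 0}"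

definition edist :: "nat \<Rightarrow> (nat \<Rightarrow> real) \<Rightarrow> (nat \<Rightarrow> real) \<Rightarrow> real" where
  "edist n p q = sqrt (\<Sum>j=1..n. (p j - q j)\<^sup>2)"

definition setdist_pt :: "nat \<Rightarrow> (nat \<Rightarrow> real) \<Rightarrow> (nat \<Rightarrow> real) set \<Rightarrow> real" where
  "setdist_pt n p A = (INF q\<in>A. edist n p q)"

definition enorm :: "nat \<Rightarrow> (nat \<Rightarrow> real) \<Rightarrow> real" where
  "enorm n v = sqrt (\<Sum>k=1..n. (v k)\<^sup>2)"

definition softmax :: "nat \<Rightarrow> (nat \<Rightarrow> real) \<Rightarrow> nat \<Rightarrow> real" where
  "softmax M S k = (if k = M then 1 / (1 + (\<Sum>j=1..M-1. exp (S j)))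
                    else exp (S k) / (1 + (\<Sum>j=1..M-1. exp (S j))))"

definition Vfun :: "nat \<Rightarrow> (nat \<Rightarrow> real) \<Rightarrow> (nat \<Rightarrow> real) \<Rightarrow> real" where
  "Vfun M pstar S = ln (1 + (\<Sum>k=1..M-1. exp (S k))) - (\<Sum>k=1..M-1. S k * pstar k)"

definition gradV :: "nat \<Rightarrow> (nat \<Rightarrow> real) \<Rightarrow> (nat \<Rightarrow> real) \<Rightarrow> nat \<Rightarrow> real" where
  "gradV M pstar S k = softmax M S k - pstar k"

end

theory Submission
  imports Defs
begin

lemma abs_le_enorm: "k \<in> {1..n} \<Longrightarrow> \<bar>v k\<bar> \<le> enorm n v"
proof -
  assume k: "k \<in> {1..n}"
  have "\<bar>v k\<bar> = sqrt ((v k)\<^sup>2)" by simp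
  also have "\<dots> \<le> sqrt (\<Sum>k=1..n. (v k)\<^sup>2)"
    by (rule real_sqrt_le_mono, rule member_le_sum[OF k]) auto
  finally show ?thesis unfolding enorm_def .
qed

lemma abs_le_edist: "k \<in> {1..n} \<Longrightarrow> \<bar>p k - q k\<bar> \<le> edist n p q"
  using abs_le_enorm[of k n "\<lambda>j. p j - q j"] by (simp add: enorm_def edist_def)

theorem lemma3:
  fixes M :: nat and pstar :: "nat \<Rightarrow> real"
  assumes "M \<ge> 2"
    and "pstar \<in> simplex_interior M"
  shows "\<exists>c R. c > 0 \<and>
           (\<forall>S. \<not> (Vfun M pstar S \<le> R) \<longrightarrow> enorm (M - 1) (gradV M pstar S) \<ge> c) \<and>
           c \<le> setdist_pt M pstar (simplex_boundary M) \<and>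
           c \<le> Min (pstar ` {1..M})"
proof -
  have pos: "\<And>j. j \<in> {1..M} \<Longrightarrow> 0 < pstar j" and sum1: "(\<Sum>j=1..M. pstar j) = 1"
    using assms(2) by (auto simp: simplex_interior_def)
  define m where "m = Min (pstar ` {1..M})"
  have ne: "pstar ` {1..M} \<noteq> {}" using assms(1) by auto
  have mle: "\<And>j. j \<in> {1..M} \<Longrightarrow> m \<le> pstar j" unfolding m_def by (rule Min_le) auto
  have "m \<in> pstar ` {1..M}" unfolding m_def by (rule Min_in[OF _ ne]) auto
  then have mpos: "m > 0" using pos by auto
  have ins: "{1..M} = insert M {1..M-1}" using assms(1) by auto
  have sumps: "(\<Sum>k=1..M-1. pstar k) + pstar M = 1"
  proof -
    have "M \<notin> {1..M-1}" using assms(1) by auto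
    then show ?thesis using sum1 unfolding ins by (simp add: sum.insert add.commute)
  qed
  have pos1: "0 \<le> pstar j" if "j \<in> {1..M-1}" for j
  proof -
    have "j \<in> {1..M}" using that by auto
    then show ?thesis using pos less_imp_le by blast
  qed
  have sps_nonneg: "(\<Sum>k=1..M-1. pstar k) \<ge> 0" using pos1 by (intro sum_nonneg) auto
  have "M \<in> {1..M}" using assms(1) by auto
  then have "pstar M \<ge> 0" using pos less_imp_le by blast
  have "m \<le> pstar M" using mle assms(1) by auto
  define c where "c = m / (2 * real M)"
  define L where "L = ln (2 / m)"
  define R where "R = 2 * L"
  have Mpos: "real M \<ge> 2" using assms(1) by simp
  have cpos: "c > 0" unfolding c_def using mpos Mpos by simp
  have cle: "c \<le> m / 2" unfolding c_def using mpos Mpos by (simp add: field_simps)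
  have m1: "m \<le> 1" using \<open>m \<le> pstar M\<close> sumps sps_nonneg by linarith
  have L0: "L \<ge> 0" unfolding L_def using mpos m1 by simp
  have main: "enorm (M - 1) (gradV M pstar S) \<ge> c" if nV: "\<not> (Vfun M pstar S \<le> R)" for S
  proof (rule ccontr)
    assume "\<not> enorm (M - 1) (gradV M pstar S) \<ge> c"
    then have small: "enorm (M - 1) (gradV M pstar S) < c" by simp
    define D where "D = 1 + (\<Sum>j=1..M-1. exp (S j))"
    have D1: "D \<ge> 1" unfolding D_def by (simp add: sum_nonneg)
    have sm: "\<And>k. k \<in> {1..M-1} \<Longrightarrow> softmax M S k = exp (S k) / D"
      unfolding softmax_def D_def by auto
    have close: "\<And>k. k \<in> {1..M-1} \<Longrightarrow> \<bar>exp (S k) / D - pstar k\<bar> < c"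
      using abs_le_enorm[of _ "M-1" "gradV M pstar S"] small sm
      by (force simp: gradV_def)
    have "(\<Sum>k=1..M-1. exp (S k) / D) = (D - 1) / D"
      by (simp add: sum_divide_distrib[symmetric] D_def)
    then have sumsm: "(\<Sum>k=1..M-1. exp (S k) / D) + 1 / D = 1" using D1
      by (simp add: field_simps)
    have "\<bar>1 / D - pstar M\<bar> = \<bar>\<Sum>k=1..M-1. (pstar k - exp (S k) / D)\<bar>"
      using sumsm sumps by (simp add: sum_subtractf)
    also have "\<dots> \<le> (\<Sum>k=1..M-1. \<bar>pstar k - exp (S k) / D\<bar>)" by (rule sum_abs)
    also have "\<dots> \<le> real (card {1..M-1}) * c"
      by (rule sum_bounded_above) (use close in \<open>force simp: abs_minus_commute\<close>)
    also have "\<dots> = (real M - 1) * c" using assms(1) by (simp add: of_nat_diff)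
    also have "\<dots> \<le> m / 2" unfolding c_def using mpos Mpos by (simp add: field_simps)
    finally have "1 / D \<ge> m / 2" using \<open>m \<le> pstar M\<close> by linarith
    then have "D \<le> 2 / m" using D1 mpos by (simp add: field_simps)
    then have lnD: "ln D \<le> L" unfolding L_def using D1 by (intro ln_mono) auto
    have Sk: "- S k \<le> L" if k: "k \<in> {1..M-1}" for k
    proof -
      have "k \<in> {1..M}" using k by auto
      then have "exp (S k) / D > m - c" using close[OF k] mle by force
      then have "exp (S k) / D \<ge> m / 2" using cle by linarith
      then have "exp (S k) \<ge> D * (m / 2)" using D1 by (simp add: field_simps)
      also have "D * (m/2) \<ge> m / 2" using D1 mpos by simp
      finally have "m/2 \<le> exp (S k)" .
      then have "ln (m/2) \<le> ln (exp (S k))" using mpos by (intro ln_mono) auto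
      then have "ln (exp (S k)) \<ge> ln (m/2)" by simp
      then show ?thesis unfolding L_def using mpos by (simp add: ln_div)
    qed
    have "- (\<Sum>k=1..M-1. S k * pstar k) = (\<Sum>k=1..M-1. (- S k) * pstar k)"
      by (simp add: sum_negf)
    also have "\<dots> \<le> (\<Sum>k=1..M-1. L * pstar k)"
      by (rule sum_mono, rule mult_right_mono) (use Sk pos1 in auto)
    also have "\<dots> = L * (\<Sum>k=1..M-1. pstar k)" by (simp add: sum_distrib_left)
    also have "\<dots> \<le> L * 1"
      using L0 sumps \<open>pstar M \<ge> 0\<close> by (intro mult_left_mono) auto
    finally have "Vfun M pstar S \<le> R"
      using lnD unfolding Vfun_def R_def D_def[symmetric] by linarith
    then show False using nV by simp
  qed
  have bne: "simplex_boundary M \<noteq> {}"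
  proof -
    let ?q = "\<lambda>j::nat. if j = 1 then 1 else (0::real)"
    have "(\<Sum>j=1..M. ?q j) = 1" using assms(1) by (simp add: sum.delta)
    then have "?q \<in> simplex_boundary M" using assms(1)
      by (auto simp: simplex_boundary_def simplex_set_def intro!: bexI[of _ M])
    then show ?thesis by blast
  qed
  have sd: "c \<le> setdist_pt M pstar (simplex_boundary M)"
    unfolding setdist_pt_def
  proof (rule cINF_greatest[OF bne])
    fix q assume "q \<in> simplex_boundary M"
    then obtain j where j: "j \<in> {1..M}" "q j = 0" by (auto simp: simplex_boundary_def)
    have "c \<le> m" using cle mpos by simp
    also have "\<dots> \<le> pstar j" using mle j by simp
    also have "\<dots> = \<bar>pstar j - q j\<bar>" using pos[OF j(1)] j(2) by simp
    also have "\<dots> \<le> edist M pstar q" by (rule abs_le_edist[OF j(1)])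
    finally show "c \<le> edist M pstar q" .
  qed
  show ?thesis
    apply (rule exI[of _ c], rule exI[of _ R])
    using cpos main sd cle mpos unfolding m_def by auto
qed

end
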